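(* Let $\star\in\{\boxtimes,\circ\}$, let $G,H$ be graphs with non-empty edge sets, and let $M_G\subseteq E_G$, $M_H\subseteq E_H$. The following are equivalent: (1) $F_{\ast}(M_G,M_H)$ is a maximum $1$-matching of $G\star H$; (2) $M_G$ is a perfect $1$-matching of $G$ and $M_H$ is a perfect $1$-matching of $H$; (3) $F_{\ast}(M_G,M_H)$ is a perfect $1$-matching of $G\star H$.
   Context: Graphs are finite, simple, undirected. A $1$-matching of $G$ is a set of pairwise vertex-disjoint edges; it is maximum if it has largest cardinality among $1$-matchings of $G$, and perfect if every vertex is incident to one of its edges. Products on $V_G\times V_H$: in $G\boxtimes H$, $(g,h)\sim(g',h')$ iff (i) $\{g,g'\}\in E_G$, $h=h'$; or (ii) $g=g'$, $\{h,h'\}\in E_H$; or (iii) $\{g,g'\}\in E_G$ and $\{h,h'\}\in E_H$; in $G\circ H$ iff $\{g,g'\}\in E_G$ or (ii). $F_{\ast}(M_G,M_H)=\{\{(g,h),(g',h')\}:\{g,g'\}\in M_G,\{h,h'\}\in M_H\}$. *)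

theory Defs
  imports Main
begin

definition graph :: "'a set \<Rightarrow> 'a set set \<Rightarrow> bool" where
  "graph V E \<longleftrightarrow> finite V \<and>
     (\<forall>e\<in>E. \<exists>u v. e = {u, v} \<and> u \<noteq> v \<and> u \<in> V \<and> v \<in> V)"

definition matching :: "'a set set \<Rightarrow> 'a set set \<Rightarrow> bool" where
  "matching E M \<longleftrightarrow> M \<subseteq> E \<and> (\<forall>e\<in>M. \<forall>f\<in>M. e \<noteq> f \<longrightarrow> e \<inter> f = {})"

definition maximum_matching :: "'a set set \<Rightarrow> 'a set set \<Rightarrow> bool" where
  "maximum_matching E M \<longleftrightarrow> matching E M \<and>
     (\<forall>M'. matching E M' \<longrightarrow> card M' \<le> card M)"

definition perfect_matching :: "'a set \<Rightarrow> 'a set set \<Rightarrow> 'a set set \<Rightarrow> bool" where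
  "perfect_matching V E M \<longleftrightarrow> matching E M \<and> (\<forall>v\<in>V. \<exists>e\<in>M. v \<in> e)"

datatype graph_product = Strong | Lexicographic

fun prod_edges :: "graph_product \<Rightarrow> 'a set \<Rightarrow> 'a set set \<Rightarrow> 'b set \<Rightarrow> 'b set set
    \<Rightarrow> ('a \<times> 'b) set set" where
  "prod_edges Strong VG EG VH EH =
     {{(g, h), (g', h')} | g h g' h'. g \<in> VG \<and> g' \<in> VG \<and> h \<in> VH \<and> h' \<in> VH \<and>
        (({g, g'} \<in> EG \<and> h = h') \<or> (g = g' \<and> {h, h'} \<in> EH) \<or>
         ({g, g'} \<in> EG \<and> {h, h'} \<in> EH))}"
| "prod_edges Lexicographic VG EG VH EH =
     {{(g, h), (g', h')} | g h g' h'. g \<in> VG \<and> g' \<in> VG \<and> h \<in> VH \<and> h' \<in> VH \<and>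
        ({g, g'} \<in> EG \<or> (g = g' \<and> {h, h'} \<in> EH))}"

definition F_ast :: "'a set set \<Rightarrow> 'b set set \<Rightarrow> ('a \<times> 'b) set set" where
  "F_ast MG MH = {{(g, h), (g', h')} | g h g' h'. {g, g'} \<in> MG \<and> {h, h'} \<in> MH}"

end

theory Submission
  imports Defs
begin

lemma graph_edge:
  assumes "graph V E" "{g, g'} \<in> E"
  shows "g \<noteq> g' \<and> g \<in> V \<and> g' \<in> V"
proof -
  obtain u v where "{g,g'} = {u,v}" "u \<noteq> v" "u \<in> V" "v \<in> V"
    using assms unfolding graph_def by blast
  thus ?thesis by (auto simp: doubleton_eq_iff)
qed

lemma graph_edge_ex:
  assumes "graph V E" "e \<in> E"
  shows "\<exists>u v. e = {u,v} \<and> u \<noteq> v \<and> u \<in> V \<and> v \<in> V"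
  using assms unfolding graph_def by blast

lemma pe_props:
  assumes "e \<in> prod_edges star VG EG VH EH" "graph VG EG" "graph VH EH"
  shows "card e = 2 \<and> e \<subseteq> VG \<times> VH"
  using assms by (cases star) (auto dest: graph_edge)

lemma pe_fin:
  assumes "graph VG EG" "graph VH EH"
  shows "finite (prod_edges star VG EG VH EH)"
proof -
  have "prod_edges star VG EG VH EH \<subseteq> Pow (VG \<times> VH)"
    using pe_props[OF _ assms] by blast
  moreover have "finite (VG \<times> VH)" using assms unfolding graph_def by auto
  ultimately show ?thesis by (meson finite_Pow_iff finite_subset)
qed

lemma pe_vert:
  assumes "graph VG EG" "graph VH EH" "g0 \<in> VG" "{h,h'} \<in> EH"
  shows "{(g0,h),(g0,h')} \<in> prod_edges star VG EG VH EH"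
  using assms graph_edge[OF assms(2,4)] by (cases star) auto

lemma pe_horz:
  assumes "graph VG EG" "graph VH EH" "h0 \<in> VH" "{g,g'} \<in> EG"
  shows "{(g,h0),(g',h0)} \<in> prod_edges star VG EG VH EH"
  using assms graph_edge[OF assms(1,4)] by (cases star) auto

lemma F_sub:
  assumes "graph VG EG" "graph VH EH" "MG \<subseteq> EG" "MH \<subseteq> EH"
  shows "F_ast MG MH \<subseteq> prod_edges star VG EG VH EH"
proof
  fix e assume "e \<in> F_ast MG MH"
  then obtain g h g' h' where e: "e = {(g,h),(g',h')}" "{g,g'} \<in> MG" "{h,h'} \<in> MH"
    unfolding F_ast_def by blast
  have "{g,g'} \<in> EG" "{h,h'} \<in> EH" using e assms by auto
  hence "g \<in> VG" "g' \<in> VG" "h \<in> VH" "h' \<in> VH"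
    using graph_edge[OF assms(1)] graph_edge[OF assms(2)] by auto
  with \<open>{g,g'} \<in> EG\<close> \<open>{h,h'} \<in> EH\<close>
  show "e \<in> prod_edges star VG EG VH EH" unfolding e(1) by (cases star) (simp, blast)+
qed

lemma match_card:
  assumes "finite V" "\<And>e. e \<in> E \<Longrightarrow> card e = 2 \<and> e \<subseteq> V" "matching E M"
  shows "2 * card M = card (\<Union>M)" "card (\<Union>M) \<le> card V"
proof -
  have MP: "M \<subseteq> Pow V" using assms unfolding matching_def by blast
  hence fM: "finite M" using assms(1) by (meson finite_Pow_iff finite_subset)
  have "pairwise disjnt M" using assms(3) unfolding matching_def pairwise_def disjnt_def by blast
  moreover have "\<And>A. A \<in> M \<Longrightarrow> finite A" using MP assms(1) finite_subset by blast
  ultimately have "card (\<Union>M) = sum card M" by (rule card_Union_disjoint)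
  also have "\<dots> = sum (\<lambda>_. 2) M"
    by (rule sum.cong) (use assms matching_def in auto)
  finally show "2 * card M = card (\<Union>M)" by simp
  show "card (\<Union>M) \<le> card V" using MP assms(1) by (intro card_mono) auto
qed

lemma augment:
  assumes "matching E M" "finite M" "e \<in> E" "e \<noteq> {}" "e \<inter> \<Union>M = {}"
  shows "matching E (insert e M) \<and> card (insert e M) = Suc (card M)"
proof -
  have "e \<notin> M" using assms by blast
  thus ?thesis using assms unfolding matching_def by auto
qed

lemma F_memI:
  assumes "{g,g'} \<in> MG" "{h,h'} \<in> MH"
  shows "{(g,h),(g',h')} \<in> F_ast MG MH"
  unfolding F_ast_def mem_Collect_eq
  by (intro exI conjI) (rule refl | rule assms)+

lemma matchingD:
  assumes "matching E M" "e \<in> M" "f \<in> M" "e \<noteq> f"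
  shows "e \<inter> f = {}"
  using assms unfolding matching_def by simp

lemma F_matching_MG:
  assumes "matching E (F_ast MG MH)" "MH \<noteq> {}" "graph VH EH" "MH \<subseteq> EH" "graph VG EG" "MG \<subseteq> EG"
  shows "matching EG MG"
  unfolding matching_def
proof (intro conjI ballI impI)
  show "MG \<subseteq> EG" by fact
  fix e1 e2 assume e: "e1 \<in> MG" "e2 \<in> MG" "e1 \<noteq> e2"
  show "e1 \<inter> e2 = {}"
  proof (rule ccontr)
    assume "e1 \<inter> e2 \<noteq> {}"
    then obtain x where x: "x \<in> e1" "x \<in> e2" by blast
    obtain a b where ab: "e1 = {a,b}" "a \<noteq> b" using graph_edge_ex[OF assms(5)] e assms(6) by blast
    obtain c d where cd: "e2 = {c,d}" "c \<noteq> d" using graph_edge_ex[OF assms(5)] e assms(6) by blast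
    obtain y where y: "e1 = {x,y}" "x \<noteq> y" using ab x by auto
    obtain z where z: "e2 = {x,z}" "x \<noteq> z" using cd x by auto
    have "y \<noteq> z" using y z e by auto
    obtain m where m: "m \<in> MH" using assms(2) by blast
    obtain h h' where hh: "m = {h,h'}" "h \<noteq> h'" using graph_edge_ex[OF assms(3)] m assms(4) by blast
    have f1: "{(x,h),(y,h')} \<in> F_ast MG MH" using e(1) y(1) m hh(1) F_memI by metis
    have f2: "{(x,h),(z,h')} \<in> F_ast MG MH" using e(2) z(1) m hh(1) F_memI by metis
    have "{(x,h),(y,h')} \<noteq> {(x,h),(z,h')}" using \<open>y \<noteq> z\<close> y z by (auto simp: doubleton_eq_iff)
    from matchingD[OF assms(1) f1 f2 this] show False by simp
  qed
qed

lemma F_matching_MH: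
  assumes "matching E (F_ast MG MH)" "MG \<noteq> {}" "graph VH EH" "MH \<subseteq> EH" "graph VG EG" "MG \<subseteq> EG"
  shows "matching EH MH"
  unfolding matching_def
proof (intro conjI ballI impI)
  show "MH \<subseteq> EH" by fact
  fix e1 e2 assume e: "e1 \<in> MH" "e2 \<in> MH" "e1 \<noteq> e2"
  show "e1 \<inter> e2 = {}"
  proof (rule ccontr)
    assume "e1 \<inter> e2 \<noteq> {}"
    then obtain x where x: "x \<in> e1" "x \<in> e2" by blast
    obtain a b where ab: "e1 = {a,b}" "a \<noteq> b" using graph_edge_ex[OF assms(3)] e assms(4) by blast
    obtain c d where cd: "e2 = {c,d}" "c \<noteq> d" using graph_edge_ex[OF assms(3)] e assms(4) by blast
    obtain y where y: "e1 = {x,y}" "x \<noteq> y" using ab x by auto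
    obtain z where z: "e2 = {x,z}" "x \<noteq> z" using cd x by auto
    have "y \<noteq> z" using y z e by auto
    obtain m where m: "m \<in> MG" using assms(2) by blast
    obtain h h' where hh: "m = {h,h'}" "h \<noteq> h'" using graph_edge_ex[OF assms(5)] m assms(6) by blast
    have f1: "{(h,x),(h',y)} \<in> F_ast MG MH" using e(1) y(1) m hh(1) F_memI by metis
    have f2: "{(h,x),(h',z)} \<in> F_ast MG MH" using e(2) z(1) m hh(1) F_memI by metis
    have "{(h,x),(h',y)} \<noteq> {(h,x),(h',z)}" using \<open>y \<noteq> z\<close> y z by (auto simp: doubleton_eq_iff)
    from matchingD[OF assms(1) f1 f2 this] show False by simp
  qed
qed

lemma F_at:
  assumes "e \<in> F_ast MG MH" "(u,v) \<in> e"
  shows "\<exists>u' v'. {u,u'} \<in> MG \<and> {v,v'} \<in> MH \<and> e = {(u,v),(u',v')}"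
proof -
  obtain g h g' h' where e: "e = {(g,h),(g',h')}" "{g,g'} \<in> MG" "{h,h'} \<in> MH"
    using assms(1) unfolding F_ast_def by blast
  show ?thesis
  proof (cases "(u,v) = (g,h)")
    case True thus ?thesis using e by blast
  next
    case False
    hence "(u,v) = (g',h')" using assms(2) e by auto
    hence "{u,g} \<in> MG" "{v,h} \<in> MH" "e = {(u,v),(g,h)}" using e by (auto simp: insert_commute)
    thus ?thesis by blast
  qed
qed

lemma F_cov:
  assumes "x \<in> \<Union>(F_ast MG MH)"
  shows "(\<exists>e\<in>MG. fst x \<in> e) \<and> (\<exists>e\<in>MH. snd x \<in> e)"
proof -
  obtain e where e: "e \<in> F_ast MG MH" "x \<in> e" using assms by blast
  hence "(fst x, snd x) \<in> e" by simp
  from F_at[OF e(1) this] obtain u' v' where "{fst x,u'} \<in> MG" "{snd x,v'} \<in> MH" by blast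
  thus ?thesis by blast
qed

lemma mate:
  assumes "matching E M" "graph V E" "{a,x} \<in> M" "{a,y} \<in> M"
  shows "x = y"
proof -
  have "{a,x} = {a,y}" using matchingD[OF assms(1,3,4)] by blast
  moreover have "{a,x} \<in> E" "{a,y} \<in> E" using assms(1,3,4) unfolding matching_def by auto
  hence "a \<noteq> x" "a \<noteq> y" using graph_edge[OF assms(2)] by blast+
  ultimately show ?thesis by (auto simp: doubleton_eq_iff)
qed

lemma F_matching:
  assumes "matching EG MG" "matching EH MH" "graph VG EG" "graph VH EH"
    "F_ast MG MH \<subseteq> E"
  shows "matching E (F_ast MG MH)"
  unfolding matching_def
proof (intro conjI ballI impI)
  show "F_ast MG MH \<subseteq> E" by fact
  fix e1 e2 assume e: "e1 \<in> F_ast MG MH" "e2 \<in> F_ast MG MH" "e1 \<noteq> e2"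
  show "e1 \<inter> e2 = {}"
  proof (rule ccontr)
    assume "e1 \<inter> e2 \<noteq> {}"
    then obtain u v where uv: "(u,v) \<in> e1" "(u,v) \<in> e2" by auto
    obtain u1 v1 where 1: "{u,u1} \<in> MG" "{v,v1} \<in> MH" "e1 = {(u,v),(u1,v1)}"
      using F_at[OF e(1) uv(1)] by blast
    obtain u2 v2 where 2: "{u,u2} \<in> MG" "{v,v2} \<in> MH" "e2 = {(u,v),(u2,v2)}"
      using F_at[OF e(2) uv(2)] by blast
    have "u1 = u2" using mate[OF assms(1,3) 1(1) 2(1)] .
    moreover have "v1 = v2" using mate[OF assms(2,4) 1(2) 2(2)] .
    ultimately show False using 1 2 e by simp
  qed
qed

theorem mainTheorem19:
  fixes VG :: "'a set" and EG MG :: "'a set set"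
    and VH :: "'b set" and EH MH :: "'b set set"
    and star :: graph_product
  assumes "graph VG EG" and "graph VH EH"
    and "EG \<noteq> {}" and "EH \<noteq> {}"
    and "MG \<subseteq> EG" and "MH \<subseteq> EH"
  shows "(maximum_matching (prod_edges star VG EG VH EH) (F_ast MG MH)
            \<longleftrightarrow> perfect_matching VG EG MG \<and> perfect_matching VH EH MH)
       \<and> (perfect_matching VG EG MG \<and> perfect_matching VH EH MH
            \<longleftrightarrow> perfect_matching (VG \<times> VH) (prod_edges star VG EG VH EH) (F_ast MG MH))"
proof -
  define PE where "PE = prod_edges star VG EG VH EH"
  define F where "F = F_ast MG MH"
  have FPE: "F \<subseteq> PE" unfolding F_def PE_def by (rule F_sub[OF assms(1,2,5,6)])
  have finPE: "finite PE" unfolding PE_def by (rule pe_fin[OF assms(1,2)])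
  have finF: "finite F" using FPE finPE finite_subset by blast
  have peP: "\<And>e. e \<in> PE \<Longrightarrow> card e = 2 \<and> e \<subseteq> VG \<times> VH"
    unfolding PE_def by (rule pe_props[OF _ assms(1,2)])
  have finV: "finite (VG \<times> VH)" using assms unfolding graph_def by auto
  obtain g1 g1' where g1: "{g1,g1'} \<in> EG" using assms(3) graph_edge_ex[OF assms(1)] by blast
  obtain h1 h1' where h1: "{h1,h1'} \<in> EH" using assms(4) graph_edge_ex[OF assms(2)] by blast
  have g1V: "g1 \<in> VG" "g1' \<in> VG" using graph_edge[OF assms(1) g1] by auto
  have h1V: "h1 \<in> VH" "h1' \<in> VH" using graph_edge[OF assms(2) h1] by auto
  have cov_match: "perfect_matching VG EG MG \<and> perfect_matching VH EH MH"
    if mF: "matching PE F" and cG: "\<forall>g\<in>VG. \<exists>e\<in>MG. g \<in> e" and cH: "\<forall>h\<in>VH. \<exists>e\<in>MH. h \<in> e"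
  proof -
    have ne: "MG \<noteq> {}" "MH \<noteq> {}" using cG cH g1V h1V by blast+
    have "matching EG MG"
      by (rule F_matching_MG[OF mF[unfolded F_def] ne(2) assms(2) assms(6) assms(1) assms(5)])
    moreover have "matching EH MH"
      by (rule F_matching_MH[OF mF[unfolded F_def] ne(1) assms(2) assms(6) assms(1) assms(5)])
    ultimately show ?thesis using cG cH unfolding perfect_matching_def by blast
  qed
  have perfF: "perfect_matching (VG \<times> VH) PE F"
    if p: "perfect_matching VG EG MG \<and> perfect_matching VH EH MH"
  proof -
    have mG: "matching EG MG" "matching EH MH" using p unfolding perfect_matching_def by blast+
    have "matching PE F" unfolding F_def
      by (rule F_matching[OF mG assms(1) assms(2) FPE[unfolded F_def]])
    moreover have "\<exists>e\<in>F. x \<in> e" if xV: "x \<in> VG \<times> VH" for x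
    proof -
      obtain u v where x: "x = (u,v)" "u \<in> VG" "v \<in> VH" using xV by blast
      obtain eg where eg: "eg \<in> MG" "u \<in> eg" using p x unfolding perfect_matching_def by blast
      obtain eh where eh: "eh \<in> MH" "v \<in> eh" using p x unfolding perfect_matching_def by blast
      obtain a b where "eg = {a,b}" using eg graph_edge_ex[OF assms(1)] assms(5) by blast
      hence 1: "{u, if u = a then b else a} \<in> MG" using eg by (auto simp: insert_commute)
      obtain c d where "eh = {c,d}" using eh graph_edge_ex[OF assms(2)] assms(6) by blast
      hence 2: "{v, if v = c then d else c} \<in> MH" using eh by (auto simp: insert_commute)
      have "{(u,v),(if u = a then b else a, if v = c then d else c)} \<in> F"
        unfolding F_def by (rule F_memI[OF 1 2])
      thus ?thesis using x by blast
    qed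
    ultimately show ?thesis unfolding perfect_matching_def by blast
  qed
  have A: "perfect_matching VG EG MG \<and> perfect_matching VH EH MH" if mx: "maximum_matching PE F"
  proof -
    have mF: "matching PE F" using mx unfolding maximum_matching_def by blast
    have noaug: False if "e \<in> PE" "e \<noteq> {}" "e \<inter> \<Union>F = {}" for e
    proof -
      have "matching PE (insert e F) \<and> card (insert e F) = Suc (card F)"
        using augment[OF mF finF that] .
      hence "card (insert e F) \<le> card F" using mx unfolding maximum_matching_def by blast
      thus False using \<open>matching PE (insert e F) \<and> card (insert e F) = Suc (card F)\<close> by simp
    qed
    have cG: "\<forall>g\<in>VG. \<exists>e\<in>MG. g \<in> e"
    proof (rule ccontr)
      assume "\<not> ?thesis"
      then obtain g0 where g0: "g0 \<in> VG" "\<forall>e\<in>MG. g0 \<notin> e" by blast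
      have "{(g0,h1),(g0,h1')} \<in> PE" unfolding PE_def by (rule pe_vert[OF assms(1,2) g0(1) h1])
      moreover have "{(g0,h1),(g0,h1')} \<inter> \<Union>F = {}"
      proof (rule ccontr)
        assume "\<not> ?thesis"
        then obtain x where x: "x \<in> {(g0,h1),(g0,h1')} \<inter> \<Union>F" by blast
        hence "x \<in> \<Union>F" "fst x = g0" by auto
        thus False using g0 F_cov[of x MG MH] unfolding F_def by auto
      qed
      ultimately show False using noaug by blast
    qed
    have cH: "\<forall>h\<in>VH. \<exists>e\<in>MH. h \<in> e"
    proof (rule ccontr)
      assume "\<not> ?thesis"
      then obtain h0 where h0: "h0 \<in> VH" "\<forall>e\<in>MH. h0 \<notin> e" by blast
      have "{(g1,h0),(g1',h0)} \<in> PE" unfolding PE_def by (rule pe_horz[OF assms(1,2) h0(1) g1])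
      moreover have "{(g1,h0),(g1',h0)} \<inter> \<Union>F = {}"
      proof (rule ccontr)
        assume "\<not> ?thesis"
        then obtain x where x: "x \<in> {(g1,h0),(g1',h0)} \<inter> \<Union>F" by blast
        hence "x \<in> \<Union>F" "snd x = h0" by auto
        thus False using h0 F_cov[of x MG MH] unfolding F_def by auto
      qed
      ultimately show False using noaug by blast
    qed
    show ?thesis using cov_match[OF mF cG cH] .
  qed
  have B: "perfect_matching VG EG MG \<and> perfect_matching VH EH MH"
    if pf: "perfect_matching (VG \<times> VH) PE F"
  proof -
    have mF: "matching PE F" using pf unfolding perfect_matching_def by blast
    have cG: "\<forall>g\<in>VG. \<exists>e\<in>MG. g \<in> e"
    proof
      fix g assume "g \<in> VG"
      then obtain e where "e \<in> F" "(g,h1) \<in> e" using pf h1V unfolding perfect_matching_def by blast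
      hence "(g,h1) \<in> \<Union>(F_ast MG MH)" unfolding F_def by blast
      thus "\<exists>e\<in>MG. g \<in> e" using F_cov[of "(g,h1)" MG MH] by simp
    qed
    have cH: "\<forall>h\<in>VH. \<exists>e\<in>MH. h \<in> e"
    proof
      fix h assume "h \<in> VH"
      then obtain e where "e \<in> F" "(g1,h) \<in> e" using pf g1V unfolding perfect_matching_def by blast
      hence "(g1,h) \<in> \<Union>(F_ast MG MH)" unfolding F_def by blast
      thus "\<exists>e\<in>MH. h \<in> e" using F_cov[of "(g1,h)" MG MH] by simp
    qed
    show ?thesis using cov_match[OF mF cG cH] .
  qed
  have C: "maximum_matching PE F" if pf: "perfect_matching (VG \<times> VH) PE F"
  proof -
    have mF: "matching PE F" using pf unfolding perfect_matching_def by blast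
    have "\<Union>F \<subseteq> VG \<times> VH" using FPE peP by blast
    moreover have "VG \<times> VH \<subseteq> \<Union>F" using pf unfolding perfect_matching_def by blast
    ultimately have "\<Union>F = VG \<times> VH" by (rule antisym)
    hence cF: "2 * card F = card (VG \<times> VH)" using match_card(1)[OF finV peP mF] by simp
    have "card M' \<le> card F" if "matching PE M'" for M'
      using match_card[OF finV peP that] cF by linarith
    thus ?thesis using mF unfolding maximum_matching_def by blast
  qed
  have "maximum_matching PE F \<longleftrightarrow> perfect_matching VG EG MG \<and> perfect_matching VH EH MH"
    using A C perfF by blast
  moreover have "perfect_matching VG EG MG \<and> perfect_matching VH EH MH \<longleftrightarrow> perfect_matching (VG \<times> VH) PE F"
    using B perfF by blast
  ultimately show ?thesis unfolding PE_def F_def by (rule conjI)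
qed

end
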